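(* Consider a slotted system with diversity. There are $N$ users, $N_{sub}\ge2$ sub-carriers and slots $1,\dots,T$. In each slot the BS chooses one user via a user scheduling algorithm $\pi_u$ and one sub-carrier via a sub-carrier choosing algorithm $\pi_s$; these may be randomized and may depend on past adversarial actions. It then sends an update to the chosen user on the chosen sub-carrier. The adversary uses a blocking matrix $\sigma\in\{0,1\}^{N_{sub}\times T}$, where $\sigma_j(t)=0$ means sub-carrier $j$ is blocked in slot $t$. Feasibility means $\sum_{j,t}(1-\sigma_j(t))\le\alpha T$ and at most one sub-carrier is blocked per slot, where $0<\alpha<1$. Ages satisfy $a_i(1)=1$, $a_i(t+1)=1$ if user $i$ is chosen in slot $t$ on an unblocked sub-carrier, and $a_i(t+1)=a_i(t)+1$ otherwise. Let $\Delta^{\pi_u,\pi_s,\sigma}=\frac1T\sum_{t=1}^T\frac1N\sum_i\mathbb E[a_i(t)]$ and $\Delta^*(T)=\sup_\sigma\inf_{\pi_u,\pi_s}\Delta^{\pi_u,\pi_s,\sigma}$. Then $\liminf_{T\to\infty}\Delta^*(T)\ge\frac{N+1}{2}$. *)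

theory Defs
  imports "HOL-Probability.Probability"
begin

text \<open>Slots are numbered 1,2,...; users 0..<N; sub-carriers 0..<Nsub.
  A schedule sch maps a slot t to the pair (chosen user, chosen sub-carrier).
  A blocking matrix sigma j t = True means sub-carrier j is NOT blocked in slot t
  (i.e. the paper's value 1), False means blocked (value 0).\<close>

text \<open>age sigma sch i k is the age a_i(k+1) of user i at slot k+1.\<close>
primrec age :: "(nat \<Rightarrow> nat \<Rightarrow> bool) \<Rightarrow> (nat \<Rightarrow> nat \<times> nat) \<Rightarrow> nat \<Rightarrow> nat \<Rightarrow> nat" where
  "age \<sigma> sch i 0 = 1"
| "age \<sigma> sch i (Suc k) =
     (if fst (sch (Suc k)) = i \<and> \<sigma> (snd (sch (Suc k))) (Suc k) then 1
      else age \<sigma> sch i k + 1)"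

definition feasible_block :: "nat \<Rightarrow> nat \<Rightarrow> real \<Rightarrow> (nat \<Rightarrow> nat \<Rightarrow> bool) \<Rightarrow> bool" where
  "feasible_block Nsub T \<alpha> \<sigma> \<longleftrightarrow>
     real (card {(j, t). j < Nsub \<and> t \<in> {1..T} \<and> \<not> \<sigma> j t}) \<le> \<alpha> * real T \<and>
     (\<forall>t\<in>{1..T}. card {j. j < Nsub \<and> \<not> \<sigma> j t} \<le> 1)"

text \<open>Joint (possibly randomized) user/sub-carrier scheduling policies, given as the
  distribution they induce on schedules.\<close>
definition policies :: "nat \<Rightarrow> nat \<Rightarrow> (nat \<Rightarrow> nat \<times> nat) pmf set" where
  "policies N Nsub = {p. \<forall>sch\<in>set_pmf p. \<forall>t. fst (sch t) < N \<and> snd (sch t) < Nsub}"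

definition avg_age :: "nat \<Rightarrow> nat \<Rightarrow> (nat \<Rightarrow> nat \<Rightarrow> bool) \<Rightarrow> (nat \<Rightarrow> nat \<times> nat) pmf \<Rightarrow> real" where
  "avg_age N T \<sigma> p =
     (1 / real T) * (\<Sum>k<T. (1 / real N) *
        (\<Sum>i<N. measure_pmf.expectation p (\<lambda>sch. real (age \<sigma> sch i k))))"

definition opt_age :: "nat \<Rightarrow> nat \<Rightarrow> real \<Rightarrow> nat \<Rightarrow> real" where
  "opt_age N Nsub \<alpha> T =
     (SUP \<sigma>\<in>{\<sigma>. feasible_block Nsub T \<alpha> \<sigma>}. INF p\<in>policies N Nsub. avg_age N T \<sigma> p)"

end

theory Submission
  imports Defs
begin

lemma age_pos: "age \<sigma> sch i k \<ge> 1"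
  by (induction k) auto

lemma age_le: "age \<sigma> sch i k \<le> Suc k"
  by (induction k) auto

lemma age_reset: "age \<sigma> sch i k \<le> k \<Longrightarrow> fst (sch (Suc k - age \<sigma> sch i k)) = i"
proof (induction k)
  case 0
  then show ?case using age_pos[of \<sigma> sch i 0] by simp
next
  case (Suc k)
  show ?case
  proof (cases "fst (sch (Suc k)) = i \<and> \<sigma> (snd (sch (Suc k))) (Suc k)")
    case True
    then show ?thesis by simp
  next
    case False
    then have a: "age \<sigma> sch i (Suc k) = age \<sigma> sch i k + 1" using False by (simp only: age.simps(2) if_False)
    with Suc.prems have "age \<sigma> sch i k \<le> k" by simp
    with Suc.IH have "fst (sch (Suc k - age \<sigma> sch i k)) = i" by simp
    moreover have "Suc (Suc k) - age \<sigma> sch i (Suc k) = Suc k - age \<sigma> sch i k" using a by simp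
    ultimately show ?thesis by simp
  qed
qed

lemma card_small:
  assumes "j \<le> k"
  shows "card {i. i < N \<and> age \<sigma> sch i k \<le> j} \<le> j"
proof -
  let ?A = "{i. i < N \<and> age \<sigma> sch i k \<le> j}"
  let ?g = "\<lambda>i. Suc k - age \<sigma> sch i k"
  have inj: "inj_on ?g ?A"
  proof (rule inj_onI)
    fix x y assume x: "x \<in> ?A" and y: "y \<in> ?A" and e: "?g x = ?g y"
    have ex: "fst (sch (?g x)) = x" using x assms by (intro age_reset) simp
    have ey: "fst (sch (?g y)) = y" using y assms by (intro age_reset) simp
    have "fst (sch (?g x)) = fst (sch (?g y))" by (simp only: e)
    then show "x = y" by (simp only: ex ey)
  qed
  have h: "?g ` ?A \<subseteq> {Suc k - j..<Suc k}"
  proof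
    fix y assume "y \<in> ?g ` ?A"
    then obtain i where i: "age \<sigma> sch i k \<le> j" and y: "y = ?g i" by blast
    have "1 \<le> age \<sigma> sch i k" by (rule age_pos)
    then show "y \<in> {Suc k - j..<Suc k}" unfolding y atLeastLessThan_iff using i assms by linarith
  qed
  have "card (?g ` ?A) \<le> card {Suc k - j..<Suc k}"
    by (rule card_mono[OF finite_atLeastLessThan h])
  also have "card {Suc k - j..<Suc k} = j" using assms by simp
  finally have "card (?g ` ?A) \<le> j" .
  then show ?thesis using card_image[OF inj] by simp
qed

lemma sum_tri: "2 * (\<Sum>j<N. (N - j)) = N * (N + 1::nat)"
proof (induction N)
  case 0 then show ?case by simp
next
  case (Suc N)
  have "(\<Sum>j<Suc N. (Suc N - j)) = (\<Sum>j<N. Suc (N - j)) + 1"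
    by (simp add: Suc_diff_le)
  also have "\<dots> = (\<Sum>j<N. (N - j)) + N + 1"
    unfolding Suc_eq_plus1 sum.distrib by simp
  finally show ?case using Suc.IH by simp
qed

lemma sum_age_ge:
  assumes "N - 1 \<le> k"
  shows "N * (N + 1) \<le> 2 * (\<Sum>i<N. age \<sigma> sch i k)"
proof -
  have "(\<Sum>j<N. (N - j)) \<le> (\<Sum>j<N. card {i. i < N \<and> j < age \<sigma> sch i k})"
  proof (rule sum_mono)
    fix j assume j: "j \<in> {..<N}"
    have "{i. i < N \<and> j < age \<sigma> sch i k} = {..<N} - {i. i < N \<and> age \<sigma> sch i k \<le> j}"
      by auto
    moreover have "card {i. i < N \<and> age \<sigma> sch i k \<le> j} \<le> j"
      using j assms by (intro card_small) auto
    moreover have "card ({..<N} - {i. i < N \<and> age \<sigma> sch i k \<le> j}) =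
        N - card {i. i < N \<and> age \<sigma> sch i k \<le> j}"
      by (subst card_Diff_subset) auto
    ultimately show "N - j \<le> card {i. i < N \<and> j < age \<sigma> sch i k}" by simp
  qed
  also have "\<dots> = (\<Sum>j<N. \<Sum>i<N. if j < age \<sigma> sch i k then 1 else 0)"
    by (rule sum.cong) (auto simp: sum.If_cases Int_def conj_commute)
  also have "\<dots> = (\<Sum>i<N. \<Sum>j<N. if j < age \<sigma> sch i k then 1 else 0)"
    by (rule sum.swap)
  also have "\<dots> \<le> (\<Sum>i<N. age \<sigma> sch i k)"
  proof (rule sum_mono)
    fix i
    have "(\<Sum>j<N. if j < age \<sigma> sch i k then 1 else 0) = card ({..<N} \<inter> {j. j < age \<sigma> sch i k})"
      by (simp add: sum.If_cases)
    also have "\<dots> \<le> card {..<age \<sigma> sch i k}"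
      by (rule card_mono) auto
    finally show "(\<Sum>j<N. if j < age \<sigma> sch i k then 1 else (0::nat)) \<le> age \<sigma> sch i k" by simp
  qed
  finally show ?thesis using sum_tri[of N] by linarith
qed


lemma age_le_real: "real (age \<sigma> sch i k) \<le> 1 + real k"
  using age_le[of \<sigma> sch i k] by (simp add: of_nat_le_iff)

lemma integrable_age: "integrable (measure_pmf p) (\<lambda>sch. real (age \<sigma> sch i k))"
proof (rule measure_pmf.integrable_const_bound[where B = "real (Suc k)"])
  show "AE x in measure_pmf p. norm (real (age \<sigma> x i k)) \<le> real (Suc k)"
    using age_le_real[of \<sigma> _ i k] by simp
qed simp

lemma exp_nonneg: "0 \<le> measure_pmf.expectation p (\<lambda>sch. real (age \<sigma> sch i k))"
  by (rule integral_nonneg_AE) simp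

lemma exp_bound:
  assumes "N - 1 \<le> k"
  shows "real N * (real N + 1) / 2 \<le> (\<Sum>i<N. measure_pmf.expectation p (\<lambda>sch. real (age \<sigma> sch i k)))"
proof -
  have "(\<Sum>i<N. measure_pmf.expectation p (\<lambda>sch. real (age \<sigma> sch i k)))
      = measure_pmf.expectation p (\<lambda>sch. \<Sum>i<N. real (age \<sigma> sch i k))"
    using Bochner_Integration.integral_sum[where I="{..<N}" and M="measure_pmf p" and f="\<lambda>i sch. real (age \<sigma> sch i k)"] integrable_age
    by simp
  moreover have "real N * (real N + 1) / 2 \<le> measure_pmf.expectation p (\<lambda>sch. \<Sum>i<N. real (age \<sigma> sch i k))"
  proof (rule measure_pmf.integral_ge_const)
    show "integrable (measure_pmf p) (\<lambda>sch. \<Sum>i<N. real (age \<sigma> sch i k))"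
      by (intro Bochner_Integration.integrable_sum integrable_age)
    show "AE x in measure_pmf p. real N * (real N + 1) / 2 \<le> (\<Sum>i<N. real (age \<sigma> x i k))"
    proof (rule AE_I2)
      fix x
      have "N * (N + 1) \<le> 2 * (\<Sum>i<N. age \<sigma> x i k)" by (rule sum_age_ge[OF assms])
      then have "real (N * (N + 1)) \<le> real (2 * (\<Sum>i<N. age \<sigma> x i k))" by linarith
      then show "real N * (real N + 1) / 2 \<le> (\<Sum>i<N. real (age \<sigma> x i k))"
        by (simp add: algebra_simps)
    qed
  qed
  ultimately show ?thesis by simp
qed

lemma avg_lb:
  assumes "N \<ge> 1" "T \<ge> N"
  shows "(real N + 1) / 2 * (1 - (real N - 1) / real T) \<le> avg_age N T \<sigma> p"
proof -
  define S where "S k = (\<Sum>i<N. measure_pmf.expectation p (\<lambda>sch. real (age \<sigma> sch i k)))" for k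
  define h where "h k = (if N - 1 \<le> k then (real N + 1) / 2 else 0)" for k
  have "(\<Sum>k<T. h k) \<le> (\<Sum>k<T. (1 / real N) * S k)"
  proof (rule sum_mono)
    fix k
    show "h k \<le> (1 / real N) * S k"
    proof (cases "N - 1 \<le> k")
      case True
      have "real N * (real N + 1) / 2 \<le> S k" unfolding S_def by (rule exp_bound[OF True])
      then have "(1 / real N) * (real N * (real N + 1) / 2) \<le> (1 / real N) * S k"
        by (rule mult_left_mono) simp
      then show ?thesis using True assms by (simp add: h_def)
    next
      case False
      have "0 \<le> S k" unfolding S_def by (rule sum_nonneg) (rule exp_nonneg)
      then show ?thesis using False by (simp add: h_def)
    qed
  qed
  moreover have "(\<Sum>k<T. h k) = real (T - (N - 1)) * ((real N + 1) / 2)"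
  proof -
    have "(\<Sum>k<T. h k) = (\<Sum>k\<in>{N - 1..<T}. (real N + 1) / 2)"
      unfolding h_def by (rule sum.mono_neutral_cong_right) auto
    then show ?thesis by simp
  qed
  ultimately have A: "real (T - (N - 1)) * ((real N + 1) / 2) \<le> (\<Sum>k<T. (1 / real N) * S k)"
    by simp
  have T0: "real T > 0" using assms by simp
  have "(real N + 1) / 2 * (1 - (real N - 1) / real T) = (1 / real T) * (real (T - (N - 1)) * ((real N + 1) / 2))"
    using assms T0 by (simp add: of_nat_diff field_simps)
  also have "\<dots> \<le> (1 / real T) * (\<Sum>k<T. (1 / real N) * S k)"
    using A T0 by (intro mult_left_mono) auto
  also have "\<dots> = avg_age N T \<sigma> p" unfolding avg_age_def S_def by simp
  finally show ?thesis .
qed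

lemma avg_nonneg: "0 \<le> avg_age N T \<sigma> p"
  unfolding avg_age_def
  by (intro mult_nonneg_nonneg sum_nonneg exp_nonneg) auto

lemma avg_ub: "avg_age N T \<sigma> (return_pmf (\<lambda>t. (0, 0))) \<le>
   (1 / real T) * (1 / real N) * (\<Sum>k<T. \<Sum>i<N. real (Suc k))"
proof -
  have "avg_age N T \<sigma> (return_pmf (\<lambda>t. (0, 0))) =
     (1 / real T) * (1 / real N) * (\<Sum>k<T. \<Sum>i<N. real (age \<sigma> (\<lambda>t. (0, 0)) i k))"
    unfolding avg_age_def by (simp add: sum_distrib_left)
  also have "\<dots> \<le> (1 / real T) * (1 / real N) * (\<Sum>k<T. \<Sum>i<N. real (Suc k))"
    by (intro mult_left_mono sum_mono) (use age_le_real in auto)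
  finally show ?thesis .
qed

theorem theorem10:
  fixes N Nsub :: nat and \<alpha> :: real
  assumes "N \<ge> 1" and "Nsub \<ge> 2" and "0 < \<alpha>" and "\<alpha> < 1"
  shows "Liminf sequentially (\<lambda>T. ereal (opt_age N Nsub \<alpha> T)) \<ge> ereal ((real N + 1) / 2)"
proof -
  define c where "c = (real N + 1) / 2"
  define g where "g T = c * (1 - (real N - 1) / real T)" for T :: nat
  have p0: "return_pmf (\<lambda>t. (0, 0)) \<in> policies N Nsub"
    using assms unfolding policies_def by auto
  have ne: "policies N Nsub \<noteq> {}" using p0 by auto
  have bound: "g T \<le> opt_age N Nsub \<alpha> T" if "T \<ge> N" for T
  proof -
    let ?s0 = "\<lambda>(j::nat) (t::nat). True"
    have f0: "feasible_block Nsub T \<alpha> ?s0"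
      unfolding feasible_block_def using assms by simp
    have "g T \<le> (INF p\<in>policies N Nsub. avg_age N T ?s0 p)"
      unfolding g_def c_def
      by (rule cINF_greatest[OF ne]) (rule avg_lb[OF assms(1) that])
    also have "\<dots> \<le> opt_age N Nsub \<alpha> T"
      unfolding opt_age_def
    proof (rule cSUP_upper)
      show "?s0 \<in> {\<sigma>. feasible_block Nsub T \<alpha> \<sigma>}" using f0 by simp
      show "bdd_above ((\<lambda>\<sigma>. INF p\<in>policies N Nsub. avg_age N T \<sigma> p) ` {\<sigma>. feasible_block Nsub T \<alpha> \<sigma>})"
      proof (rule bdd_aboveI2)
        fix \<sigma>
        have "(INF p\<in>policies N Nsub. avg_age N T \<sigma> p) \<le> avg_age N T \<sigma> (return_pmf (\<lambda>t. (0, 0)))"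
          by (rule cINF_lower[OF _ p0]) (rule bdd_belowI2, rule avg_nonneg)
        also have "\<dots> \<le> (1 / real T) * (1 / real N) * (\<Sum>k<T. \<Sum>i<N. real (Suc k))"
          by (rule avg_ub)
        finally show "(INF p\<in>policies N Nsub. avg_age N T \<sigma> p) \<le> (1 / real T) * (1 / real N) * (\<Sum>k<T. \<Sum>i<N. real (Suc k))" .
      qed
    qed
    finally show ?thesis .
  qed
  have lim: "(\<lambda>T. ereal (g T)) \<longlonglongrightarrow> ereal c"
  proof (rule tendsto_ereal)
    have eq: "g = (\<lambda>T. c * (1 - (real N - 1) / real T))" by (simp add: g_def fun_eq_iff)
    have "(\<lambda>T. c * (1 - (real N - 1) / real T)) \<longlonglongrightarrow> c * (1 - 0)"
      by (intro tendsto_intros lim_const_over_n)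
    then show "g \<longlonglongrightarrow> c" unfolding eq by simp
  qed
  have "ereal c = Liminf sequentially (\<lambda>T. ereal (g T))"
    by (rule lim_imp_Liminf[OF trivial_limit_sequentially lim, symmetric])
  also have "\<dots> \<le> Liminf sequentially (\<lambda>T. ereal (opt_age N Nsub \<alpha> T))"
    by (rule Liminf_mono) (use bound in \<open>auto simp: eventually_sequentially\<close>)
  finally show ?thesis unfolding c_def .
qed

end
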